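(* Let $d\ge 1$ and let $Z_1,\ldots,Z_d$ be independent standard normal random variables. For $q\in\mathbb{R}$ and $l=(l_1,\ldots,l_d)'\in\mathbb{R}^d$ define $H(q;l)=P\big(\sum_{j=1}^d l_j Z_j^2\le q\big)$, where the probability is with respect to $Z_1,\ldots,Z_d$ only. Let $\lambda=(\lambda_1,\ldots,\lambda_d)'$ be a fixed vector with $\lambda_j>0$ for all $j$. Let $(T_n)$ be any sequence of real-valued random variables, and let $(\hat\lambda_n)$ be a sequence of $\mathbb{R}^d$-valued random vectors (defined on the same probability space as the $T_n$) with $\hat\lambda_n\to\lambda$ in probability. Define $p_n=1-H(T_n;\lambda)$ and $\hat p_n=1-H(T_n;\hat\lambda_n)$. Then $\hat p_n-p_n=\|\hat\lambda_n-\lambda\|\,O_P(1)$, i.e. there exist random variables $B_n$ that are bounded in probability such that $|\hat p_n-p_n|\le \|\hat\lambda_n-\lambda\|\,B_n$; consequently $\hat p_n-p_n\to 0$ in probability.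
   Context: No assumption is made on the distribution of $T_n$. $O_P(1)$ denotes a sequence of random variables that is bounded in probability (tight). *)

theory Defs
  imports "HOL-Probability.Probability"
begin

text \<open>Joint law of d independent standard normal variables Z_0,...,Z_(d-1)
  (indices 0..d-1 stand for the paper's 1..d).\<close>
definition std_normal_vec :: "nat \<Rightarrow> (nat \<Rightarrow> real) measure" where
  "std_normal_vec d = PiM {..<d} (\<lambda>_. density lborel std_normal_density)"

definition H :: "nat \<Rightarrow> real \<Rightarrow> (nat \<Rightarrow> real) \<Rightarrow> real" where
  "H d q l = measure (std_normal_vec d)
      {z \<in> space (std_normal_vec d). (\<Sum>j<d. l j * (z j)\<^sup>2) \<le> q}"

definition vdist :: "nat \<Rightarrow> (nat \<Rightarrow> real) \<Rightarrow> (nat \<Rightarrow> real) \<Rightarrow> real" where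
  "vdist d a b = sqrt (\<Sum>j<d. (a j - b j)\<^sup>2)"

definition conv_in_prob :: "'a measure \<Rightarrow> (nat \<Rightarrow> 'a \<Rightarrow> real) \<Rightarrow> real \<Rightarrow> bool" where
  "conv_in_prob M X c \<longleftrightarrow>
     (\<forall>e>0. (\<lambda>n. measure M {\<omega> \<in> space M. \<bar>X n \<omega> - c\<bar> > e}) \<longlonglongrightarrow> 0)"

definition bounded_in_prob :: "'a measure \<Rightarrow> (nat \<Rightarrow> 'a \<Rightarrow> real) \<Rightarrow> bool" where
  "bounded_in_prob M X \<longleftrightarrow>
     (\<forall>e>0. \<exists>K. \<forall>n. measure M {\<omega> \<in> space M. \<bar>X n \<omega>\<bar> > K} < e)"

end

theory Submission
  imports Defs
begin



lemma PiM_density_lborel: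
  fixes f :: "real \<Rightarrow> ennreal"
  assumes fin: "finite I" and fm[measurable]: "f \<in> borel_measurable borel"
    and ps: "prob_space (density lborel f)"
  shows "PiM I (\<lambda>_. density lborel f) = density (PiM I (\<lambda>_. lborel)) (\<lambda>z. \<Prod>i\<in>I. f (z i))"
proof -
  interpret P: product_sigma_finite "\<lambda>_. density lborel f"
    unfolding product_sigma_finite_def using ps prob_space_imp_sigma_finite by blast
  interpret L: product_sigma_finite "\<lambda>_. lborel :: real measure"
    unfolding product_sigma_finite_def using sigma_finite_lborel by blast
  show ?thesis
  proof (rule P.PiM_eqI[symmetric, OF fin])
    show "sets (density (PiM I (\<lambda>_. lborel)) (\<lambda>z. \<Prod>i\<in>I. f (z i))) = sets (PiM I (\<lambda>_. density lborel f))"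
      by (simp only: sets_density) (rule sets_PiM_cong; simp)
  next
    fix A assume A: "\<And>i. i \<in> I \<Longrightarrow> A i \<in> sets (density lborel f)"
    then have A': "\<And>i. i \<in> I \<Longrightarrow> A i \<in> sets borel" by simp
    have box: "Pi\<^sub>E I A \<in> sets (PiM I (\<lambda>_. lborel))"
      using A' fin by (intro sets_PiM_I_finite) auto
    have "emeasure (density (PiM I (\<lambda>_. lborel)) (\<lambda>z. \<Prod>i\<in>I. f (z i))) (Pi\<^sub>E I A)
        = (\<integral>\<^sup>+ z. (\<Prod>i\<in>I. f (z i)) * indicator (Pi\<^sub>E I A) z \<partial>PiM I (\<lambda>_. lborel))"
      using box by (subst emeasure_density) (auto intro!: borel_measurable_prod_ennreal)
    also have "\<dots> = (\<integral>\<^sup>+ z. (\<Prod>i\<in>I. f (z i) * indicator (A i) (z i)) \<partial>PiM I (\<lambda>_. lborel))"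
    proof (rule nn_integral_cong)
      fix z assume "z \<in> space (PiM I (\<lambda>_. lborel :: real measure))"
      then have ext: "z \<in> extensional I" by (simp add: space_PiM PiE_def)
      have "indicator (Pi\<^sub>E I A) z = (\<Prod>i\<in>I. indicator (A i) (z i) :: ennreal)"
        using ext fin by (auto simp: indicator_def PiE_def Pi_def)
      then show "(\<Prod>i\<in>I. f (z i)) * indicator (Pi\<^sub>E I A) z = (\<Prod>i\<in>I. f (z i) * indicator (A i) (z i))"
        by (simp add: prod.distrib)
    qed
    also have "\<dots> = (\<Prod>i\<in>I. \<integral>\<^sup>+ x. f x * indicator (A i) x \<partial>lborel)"
      using A' fin by (intro L.product_nn_integral_prod) auto
    also have "\<dots> = (\<Prod>i\<in>I. emeasure (density lborel f) (A i))"
      using A' by (intro prod.cong refl) (simp add: emeasure_density)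
    finally show "emeasure (density (PiM I (\<lambda>_. lborel)) (\<lambda>z. \<Prod>i\<in>I. f (z i))) (Pi\<^sub>E I A) = (\<Prod>i\<in>I. emeasure (density lborel f) (A i))" .
  qed
qed



lemma scaled_normal:
  fixes t :: real assumes t: "t > 0"
  shows "distr (density lborel (\<lambda>x. ennreal (std_normal_density x))) borel (\<lambda>x. x / t)
       = density lborel (\<lambda>x. ennreal (t * std_normal_density (t * x)))"
proof (rule measure_eqI)
  show "sets (distr (density lborel (\<lambda>x. ennreal (std_normal_density x))) borel (\<lambda>x. x / t)) =
    sets (density lborel (\<lambda>x. ennreal (t * std_normal_density (t * x))))" by simp
next
  fix A assume "A \<in> sets (distr (density lborel (\<lambda>x. ennreal (std_normal_density x))) borel (\<lambda>x. x / t))"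
  then have A[measurable]: "A \<in> sets borel" by simp
  have "emeasure (distr (density lborel (\<lambda>x. ennreal (std_normal_density x))) borel (\<lambda>x. x / t)) A
      = emeasure (density lborel (\<lambda>x. ennreal (std_normal_density x))) ((\<lambda>x. x / t) -` A)"
    by (subst emeasure_distr) auto
  also have "\<dots> = (\<integral>\<^sup>+x. ennreal (std_normal_density x) * indicator A (x / t) \<partial>lborel)"
    using measurable_sets_borel[OF _ A, of "\<lambda>x. x / t"]
    by (subst emeasure_density) (auto intro!: nn_integral_cong simp: indicator_def)
  also have "\<dots> = ennreal \<bar>t\<bar> * (\<integral>\<^sup>+x. ennreal (std_normal_density (0 + t * x)) * indicator A ((0 + t * x) / t) \<partial>lborel)"
    using t by (intro nn_integral_real_affine) auto
  also have "\<dots> = (\<integral>\<^sup>+x. ennreal t * (ennreal (std_normal_density (t * x)) * indicator A x) \<partial>lborel)"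
    using t by (subst nn_integral_cmult) auto
  also have "\<dots> = (\<integral>\<^sup>+x. ennreal (t * std_normal_density (t * x)) * indicator A x \<partial>lborel)"
    using t by (intro nn_integral_cong) (simp add: ennreal_mult mult.assoc)
  also have "\<dots> = emeasure (density lborel (\<lambda>x. ennreal (t * std_normal_density (t * x)))) A"
    by (subst emeasure_density) auto
  finally show "emeasure (distr (density lborel (\<lambda>x. ennreal (std_normal_density x))) borel (\<lambda>x. x / t)) A =
    emeasure (density lborel (\<lambda>x. ennreal (t * std_normal_density (t * x)))) A" .
qed

lemma snd_le: "t \<ge> 1 \<Longrightarrow> std_normal_density (t * x) \<le> std_normal_density x"
proof -
  assume t: "t \<ge> 1"
  have "1 \<le> t^2" using t by (simp add: one_le_power)
  then have "1 * x^2 \<le> t^2 * x^2" by (rule mult_right_mono) simp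
  then have "x^2 \<le> (t*x)^2" by (simp add: power_mult_distrib)
  then show ?thesis unfolding std_normal_density_def by (intro mult_left_mono) auto
qed



lemma prob_std_normal_vec: "prob_space (std_normal_vec d)"
  unfolding std_normal_vec_def by (rule prob_space_PiM, rule prob_space_normal_density) simp

lemma G_scale:
  fixes lam :: "nat \<Rightarrow> real" and s a :: real
  assumes s: "s \<ge> 1"
  shows "measure (std_normal_vec d) {z \<in> space (std_normal_vec d). (\<Sum>j<d. lam j * (z j)\<^sup>2) \<le> s * a}
      \<le> s ^ d * measure (std_normal_vec d) {z \<in> space (std_normal_vec d). (\<Sum>j<d. lam j * (z j)\<^sup>2) \<le> a}"
proof -
  define t where "t = sqrt s"
  have t1: "t \<ge> 1" using s by (simp add: t_def)
  have t0: "t > 0" using t1 by simp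
  have ts: "t * t = s" using s by (simp add: t_def)
  define I where "I = {..<d}"
  have finI: "finite I" by (simp add: I_def)
  define N where "N = density lborel (\<lambda>x. ennreal (std_normal_density x))"
  define Ns where "Ns = density lborel (\<lambda>x. ennreal (t * std_normal_density (t * x)))"
  define \<mu> where "\<mu> = std_normal_vec d"
  have muN: "\<mu> = PiM I (\<lambda>_. N)" by (simp add: \<mu>_def std_normal_vec_def I_def N_def)
  have psN: "prob_space N" unfolding N_def by (rule prob_space_normal_density) simp
  have NsD: "Ns = distr N borel (\<lambda>x. x / t)" unfolding Ns_def N_def using scaled_normal[OF t0] by simp
  have psNs: "prob_space Ns" unfolding NsD by (rule prob_space.prob_space_distr[OF psN]) (simp add: N_def)
  have mcong: "measurable N Ns = measurable borel borel"
    by (rule measurable_cong_sets) (simp_all add: N_def Ns_def)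
  have hm: "(\<lambda>x. x / t) \<in> measurable N Ns" unfolding mcong by simp
  define g where "g = compose I (\<lambda>x::real. x / t)"
  have D: "distr \<mu> (PiM I (\<lambda>_. Ns)) g = PiM I (\<lambda>_. distr N Ns (\<lambda>x. x / t))"
    unfolding muN g_def by (rule distr_PiM_finite_prob_space'[OF finI psN psNs hm])
  have "distr N Ns (\<lambda>x. x / t) = distr N borel (\<lambda>x. x / t)"
    by (rule distr_cong) (simp_all add: Ns_def)
  then have D2: "distr \<mu> (PiM I (\<lambda>_. Ns)) g = PiM I (\<lambda>_. Ns)" using D NsD by simp
  have gm: "g \<in> measurable \<mu> (PiM I (\<lambda>_. Ns))"
    unfolding muN g_def compose_def
  proof (rule measurable_restrict)
    fix i assume "i \<in> I"
    then have "(\<lambda>z. z i) \<in> measurable (PiM I (\<lambda>_. N)) N" by (rule measurable_component_singleton)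
    then show "(\<lambda>z. z i / t) \<in> measurable (PiM I (\<lambda>_. N)) Ns" using hm by (rule measurable_compose)
  qed
  define S where "S = (\<lambda>z::nat\<Rightarrow>real. \<Sum>j<d. lam j * (z j)\<^sup>2)"
  define B where "B = {w \<in> space \<mu>. S w \<le> a}"
  have setsNs: "sets (PiM I (\<lambda>_. Ns)) = sets \<mu>"
    unfolding muN by (rule sets_PiM_cong) (simp_all add: N_def Ns_def)
  have setsL: "sets (PiM I (\<lambda>_. lborel :: real measure)) = sets \<mu>"
    unfolding muN by (rule sets_PiM_cong) (simp_all add: N_def)
  have spc: "space (PiM I (\<lambda>_. Ns)) = space \<mu>" by (rule sets_eq_imp_space_eq[OF setsNs])
  have compm: "(\<lambda>z. z j) \<in> borel_measurable \<mu>" if "j \<in> I" for j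
  proof -
    have "(\<lambda>z. z j) \<in> measurable (PiM I (\<lambda>_. N)) N" using that by (rule measurable_component_singleton)
    moreover have "measurable (PiM I (\<lambda>_. N)) N = measurable \<mu> borel"
      by (rule measurable_cong_sets) (simp_all add: muN N_def)
    ultimately show ?thesis by simp
  qed
  have Sm: "S \<in> borel_measurable \<mu>"
    unfolding S_def
  proof (rule borel_measurable_sum)
    fix j assume "j \<in> {..<d}"
    then have "(\<lambda>z. z j) \<in> borel_measurable \<mu>" using compm by (simp add: I_def)
    then show "(\<lambda>z. lam j * (z j)\<^sup>2) \<in> borel_measurable \<mu>" by measurable
  qed
  have Bsets: "B \<in> sets \<mu>" unfolding B_def using Sm by measurable
  have BNs: "B \<in> sets (PiM I (\<lambda>_. Ns))" using Bsets setsNs by simp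
  have BL: "B \<in> sets (PiM I (\<lambda>_. lborel :: real measure))" using Bsets setsL by simp
  have s0: "s > 0" using s by simp
  have pre: "{z \<in> space \<mu>. S z \<le> s * a} = g -` B \<inter> space \<mu>"
  proof (intro set_eqI iffI)
    fix z assume z: "z \<in> {z \<in> space \<mu>. S z \<le> s * a}"
    have gz: "g z \<in> space \<mu>" using measurable_space[OF gm] z spc by auto
    have "S (g z) = S z / s"
      unfolding S_def g_def compose_def I_def
      by (simp add: sum_divide_distrib power_divide ts[symmetric] power2_eq_square)
    then show "z \<in> g -` B \<inter> space \<mu>" using z gz s0 by (simp add: B_def pos_divide_le_eq mult.commute)
  next
    fix z assume z: "z \<in> g -` B \<inter> space \<mu>"
    have "S (g z) = S z / s"
      unfolding S_def g_def compose_def I_def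
      by (simp add: sum_divide_distrib power_divide ts[symmetric] power2_eq_square)
    then show "z \<in> {z \<in> space \<mu>. S z \<le> s * a}" using z s0 by (simp add: B_def pos_divide_le_eq mult.commute)
  qed
  have psNs': "prob_space (density lborel (\<lambda>x. ennreal (t * std_normal_density (t * x))))"
    using psNs by (simp add: Ns_def)
  have NsP: "PiM I (\<lambda>_. Ns) = density (PiM I (\<lambda>_. lborel)) (\<lambda>z. \<Prod>i\<in>I. ennreal (t * std_normal_density (t * z i)))"
    unfolding Ns_def by (rule PiM_density_lborel[OF finI _ psNs']) simp
  have muP: "\<mu> = density (PiM I (\<lambda>_. lborel)) (\<lambda>z. \<Prod>i\<in>I. ennreal (std_normal_density (z i)))"
    unfolding muN N_def by (rule PiM_density_lborel[OF finI _ prob_space_normal_density]) simp_all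
  have pw: "(\<Prod>i\<in>I. ennreal (t * std_normal_density (t * z i)))
      \<le> ennreal (t ^ d) * (\<Prod>i\<in>I. ennreal (std_normal_density (z i)))" for z
  proof -
    have "(\<Prod>i\<in>I. t * std_normal_density (t * z i)) \<le> (\<Prod>i\<in>I. t * std_normal_density (z i))"
      using t0 t1 snd_le[OF t1] by (intro prod_mono) auto
    also have "\<dots> = t ^ d * (\<Prod>i\<in>I. std_normal_density (z i))"
      by (simp add: prod.distrib I_def)
    finally have "(\<Prod>i\<in>I. t * std_normal_density (t * z i)) \<le> t ^ d * (\<Prod>i\<in>I. std_normal_density (z i))" .
    then show ?thesis using t0
      by (simp add: prod_ennreal ennreal_mult[symmetric] prod_nonneg ennreal_leI)
  qed
  have m1: "(\<lambda>z. (\<Prod>i\<in>I. ennreal (t * std_normal_density (t * z i)))) \<in> borel_measurable (PiM I (\<lambda>_. lborel))"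
    by measurable
  have m2: "(\<lambda>z. (\<Prod>i\<in>I. ennreal (std_normal_density (z i))) * indicator B z) \<in> borel_measurable (PiM I (\<lambda>_. lborel))"
    using BL by measurable
  have "emeasure \<mu> {z \<in> space \<mu>. S z \<le> s * a} = emeasure (distr \<mu> (PiM I (\<lambda>_. Ns)) g) B"
    unfolding pre by (rule emeasure_distr[OF gm BNs, symmetric])
  also have "\<dots> = emeasure (PiM I (\<lambda>_. Ns)) B" by (simp only: D2)
  also have "\<dots> = (\<integral>\<^sup>+z. (\<Prod>i\<in>I. ennreal (t * std_normal_density (t * z i))) * indicator B z \<partial>PiM I (\<lambda>_. lborel))"
    unfolding NsP by (rule emeasure_density[OF m1 BL])
  also have "\<dots> \<le> (\<integral>\<^sup>+z. ennreal (t ^ d) * ((\<Prod>i\<in>I. ennreal (std_normal_density (z i))) * indicator B z) \<partial>PiM I (\<lambda>_. lborel))"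
    by (intro nn_integral_mono, subst mult.assoc[symmetric], rule mult_right_mono[OF pw], simp)
  also have "\<dots> = ennreal (t ^ d) * (\<integral>\<^sup>+z. (\<Prod>i\<in>I. ennreal (std_normal_density (z i))) * indicator B z \<partial>PiM I (\<lambda>_. lborel))"
    by (rule nn_integral_cmult[OF m2])
  also have "\<dots> = ennreal (t ^ d) * emeasure \<mu> B"
  proof -
    have m3: "(\<lambda>z. (\<Prod>i\<in>I. ennreal (std_normal_density (z i)))) \<in> borel_measurable (PiM I (\<lambda>_. lborel))"
      by measurable
    have "emeasure \<mu> B = (\<integral>\<^sup>+z. (\<Prod>i\<in>I. ennreal (std_normal_density (z i))) * indicator B z \<partial>PiM I (\<lambda>_. lborel))"
      by (subst muP) (rule emeasure_density[OF m3 BL])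
    then show ?thesis by simp
  qed
  finally have E: "emeasure \<mu> {z \<in> space \<mu>. S z \<le> s * a} \<le> ennreal (t ^ d) * emeasure \<mu> B" .
  have Pmu: "prob_space \<mu>" unfolding \<mu>_def by (rule prob_std_normal_vec)
  have "ennreal (measure \<mu> {z \<in> space \<mu>. S z \<le> s * a}) \<le> ennreal (t ^ d * measure \<mu> B)"
    using E t0 by (simp add: finite_measure.emeasure_eq_measure[OF prob_space.finite_measure[OF Pmu]] ennreal_mult)
  then have M1: "measure \<mu> {z \<in> space \<mu>. S z \<le> s * a} \<le> t ^ d * measure \<mu> B"
    using t0 by (simp add: ennreal_le_iff)
  have "t * 1 \<le> t * t" using t1 by (intro mult_left_mono) auto
  then have ts2: "t \<le> s" using ts by simp
  have "t ^ d \<le> s ^ d" using t0 ts2 by (simp add: power_mono)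
  moreover have "measure \<mu> B \<ge> 0" by simp
  ultimately have "t ^ d * measure \<mu> B \<le> s ^ d * measure \<mu> B" by (rule mult_right_mono)
  with M1 have fin: "measure \<mu> {z \<in> space \<mu>. S z \<le> s * a} \<le> s ^ d * measure \<mu> B" by (rule order_trans)
  from fin show ?thesis by (simp only: \<mu>_def S_def B_def)
qed




lemma sum_meas: "(\<lambda>z. \<Sum>j<d. c j * (z j)\<^sup>2) \<in> borel_measurable (std_normal_vec d)"
proof (rule borel_measurable_sum)
  fix j assume j: "j \<in> {..<d}"
  have "(\<lambda>z. z j) \<in> measurable (std_normal_vec d) (density lborel (\<lambda>x. ennreal (std_normal_density x)))"
    unfolding std_normal_vec_def using j by (rule measurable_component_singleton)
  moreover have "measurable (std_normal_vec d) (density lborel (\<lambda>x. ennreal (std_normal_density x))) = measurable (std_normal_vec d) borel"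
    by (rule measurable_cong_sets) simp_all
  ultimately have "(\<lambda>z. z j) \<in> borel_measurable (std_normal_vec d)" by simp
  then show "(\<lambda>z. c j * (z j)\<^sup>2) \<in> borel_measurable (std_normal_vec d)" by measurable
qed

lemma sum_sets: "{z \<in> space (std_normal_vec d). (\<Sum>j<d. c j * (z j)\<^sup>2) \<le> a} \<in> sets (std_normal_vec d)"
  using sum_meas[where d=d and c=c] by measurable

lemma H_bounds: "0 \<le> H d q l" "H d q l \<le> 1"
proof -
  interpret P: prob_space "std_normal_vec d" by (rule prob_std_normal_vec)
  show "0 \<le> H d q l" "H d q l \<le> 1" unfolding H_def by auto
qed

lemma pow3: "1 \<le> (x::real) \<Longrightarrow> x \<le> 3 \<Longrightarrow> x ^ n - 1 \<le> real n * 3 ^ n * (x - 1)"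
proof (induction n)
  case 0 then show ?case by simp
next
  case (Suc n)
  have xn: "x ^ n - 1 \<ge> 0" using Suc.prems by (simp add: one_le_power)
  have "x ^ Suc n - 1 = x * (x ^ n - 1) + (x - 1)" by (simp add: algebra_simps)
  also have "\<dots> \<le> 3 * (x ^ n - 1) + (x - 1)" using Suc.prems xn by (intro add_right_mono mult_right_mono) auto
  also have "\<dots> \<le> 3 * (real n * 3 ^ n * (x - 1)) + (x - 1)" using Suc by simp
  also have "\<dots> \<le> real (Suc n) * 3 ^ Suc n * (x - 1)"
  proof -
    have "(1::real) \<le> 3 ^ Suc n" by (rule one_le_power) simp
    then have "3 * (real n * 3 ^ n) + 1 \<le> real (Suc n) * 3 ^ Suc n" by (simp add: algebra_simps)
    then have "(3 * (real n * 3 ^ n) + 1) * (x - 1) \<le> real (Suc n) * 3 ^ Suc n * (x - 1)"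
      using Suc.prems by (intro mult_right_mono) auto
    then show ?thesis by (simp add: algebra_simps)
  qed
  finally show ?case .
qed



lemma comp_le_vdist: "j < d \<Longrightarrow> \<bar>l j - lam j\<bar> \<le> vdist d l lam"
proof -
  assume j: "j < d"
  have "(l j - lam j)\<^sup>2 \<le> (\<Sum>i<d. (l i - lam i)\<^sup>2)"
    using j by (intro member_le_sum) auto
  then have "sqrt ((l j - lam j)\<^sup>2) \<le> sqrt (\<Sum>i<d. (l i - lam i)\<^sup>2)" by (rule real_sqrt_le_mono)
  then show ?thesis by (simp add: vdist_def)
qed

lemma lip:
  assumes d: "d \<ge> 1" and lam: "\<And>j. j < d \<Longrightarrow> lam j > 0"
  shows "\<exists>\<delta> C. \<delta> > 0 \<and> C \<ge> 0 \<and>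
    (\<forall>q l. vdist d l lam \<le> \<delta> \<longrightarrow> \<bar>H d q l - H d q lam\<bar> \<le> C * vdist d l lam)"
proof -
  define m where "m = Min (lam ` {..<d})"
  have ne: "lam ` {..<d} \<noteq> {}" using d by (simp add: lessThan_empty_iff)
  have m0: "m > 0" unfolding m_def using ne lam by (subst Min_gr_iff) auto
  have mle: "m \<le> lam j" if "j < d" for j unfolding m_def using that by (intro Min_le) auto
  define C where "C = 4 * real d * 3 ^ d / m"
  have C0: "C \<ge> 0" using m0 by (simp add: C_def)
  have main: "\<bar>H d q l - H d q lam\<bar> \<le> C * vdist d l lam" if vd: "vdist d l lam \<le> m / 2" for q l
  proof -
    define v where "v = vdist d l lam"
    have v0: "v \<ge> 0" by (simp add: v_def vdist_def sum_nonneg)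
    define \<epsilon> where "\<epsilon> = v / m"
    have e0: "\<epsilon> \<ge> 0" using v0 m0 by (simp add: \<epsilon>_def)
    have e1: "\<epsilon> \<le> 1/2" using vd m0 by (simp add: \<epsilon>_def v_def field_simps)
    have lj: "(1 - \<epsilon>) * lam j \<le> l j \<and> l j \<le> (1 + \<epsilon>) * lam j" if j: "j < d" for j
    proof -
      have "\<bar>l j - lam j\<bar> \<le> v" using comp_le_vdist[OF j] by (simp add: v_def)
      also have "v = \<epsilon> * m" using m0 by (simp add: \<epsilon>_def)
      also have "\<dots> \<le> \<epsilon> * lam j" using e0 mle[OF j] by (intro mult_left_mono) auto
      finally show ?thesis by (auto simp: algebra_simps abs_le_iff)
    qed
    define \<mu> where "\<mu> = std_normal_vec d"
    interpret P: prob_space \<mu> unfolding \<mu>_def by (rule prob_std_normal_vec)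
    define S where "S = (\<lambda>z::nat\<Rightarrow>real. \<Sum>j<d. lam j * (z j)\<^sup>2)"
    define L where "L = (\<lambda>z::nat\<Rightarrow>real. \<Sum>j<d. l j * (z j)\<^sup>2)"
    have S0: "S z \<ge> 0" for z unfolding S_def using lam by (intro sum_nonneg) (simp add: less_imp_le)
    have SL: "(1 - \<epsilon>) * S z \<le> L z \<and> L z \<le> (1 + \<epsilon>) * S z" for z
    proof
      show "(1 - \<epsilon>) * S z \<le> L z" unfolding S_def L_def sum_distrib_left
        using lj by (intro sum_mono) (simp add: mult.assoc[symmetric] mult_right_mono)
      show "L z \<le> (1 + \<epsilon>) * S z" unfolding S_def L_def sum_distrib_left
        using lj by (intro sum_mono) (simp add: mult.assoc[symmetric] mult_right_mono)
    qed
    define G where "G = (\<lambda>a. measure \<mu> {z \<in> space \<mu>. S z \<le> a})"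
    have Hl: "H d q l = measure \<mu> {z \<in> space \<mu>. L z \<le> q}" by (simp add: H_def \<mu>_def L_def)
    have Hlam: "H d q lam = G q" by (simp add: H_def \<mu>_def S_def G_def)
    have setS: "{z \<in> space \<mu>. S z \<le> a} \<in> P.events" for a unfolding \<mu>_def S_def by (rule sum_sets)
    have setL: "{z \<in> space \<mu>. L z \<le> a} \<in> P.events" for a unfolding \<mu>_def L_def by (rule sum_sets)
    show ?thesis
    proof (cases "q < 0")
      case True
      have "L z > q" for z
      proof -
        have "(1 - \<epsilon>) * S z \<ge> 0" using S0[of z] e1 by (intro mult_nonneg_nonneg) auto
        then show ?thesis using SL[of z] True by linarith
      qed
      then have e: "{z \<in> space \<mu>. L z \<le> q} = {}" by (auto simp: not_le[symmetric])
      have "S z > q" for z using S0[of z] True by simp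
      then have e': "{z \<in> space \<mu>. S z \<le> q} = {}" by (auto simp: not_le[symmetric])
      show ?thesis using Hl Hlam e e' C0 v0 by (simp add: G_def v_def)
    next
      case False
      then have q0: "q \<ge> 0" by simp
      define a where "a = q / (1 + \<epsilon>)"
      define r where "r = (1 + \<epsilon>) / (1 - \<epsilon>)"
      define b where "b = r * a"
      have e1': "1 - \<epsilon> > 0" using e1 by simp
      have b_eq: "b = q / (1 - \<epsilon>)"
      proof -
        have ne: "1 + \<epsilon> \<noteq> 0" using e0 by simp
        have "b = ((1 + \<epsilon>) * q) / ((1 - \<epsilon>) * (1 + \<epsilon>))" by (simp add: b_def r_def a_def mult.commute)
        also have "\<dots> = q / (1 - \<epsilon>)" using ne by (simp add: mult.commute)
        finally show ?thesis .
      qed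
      have aq: "a \<le> q" using q0 e0 by (simp add: a_def divide_le_eq algebra_simps mult_nonneg_nonneg)
      have qb: "q \<le> b" using q0 e0 e1' by (simp add: b_eq le_divide_eq algebra_simps mult_nonneg_nonneg)
      have s1: "{z \<in> space \<mu>. S z \<le> a} \<subseteq> {z \<in> space \<mu>. L z \<le> q}"
      proof safe
        fix z assume "z \<in> space \<mu>" "S z \<le> a"
        then have "(1 + \<epsilon>) * S z \<le> (1 + \<epsilon>) * a" using e0 by (intro mult_left_mono) auto
        also have "\<dots> = q" using e0 by (simp add: a_def)
        finally show "L z \<le> q" using SL[of z] by linarith
      qed
      have s2: "{z \<in> space \<mu>. L z \<le> q} \<subseteq> {z \<in> space \<mu>. S z \<le> b}"
      proof safe
        fix z assume "z \<in> space \<mu>" "L z \<le> q"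
        then have "(1 - \<epsilon>) * S z \<le> q" using SL[of z] by linarith
        then show "S z \<le> b" using e1' by (simp add: b_eq le_divide_eq mult.commute)
      qed
      have s3: "{z \<in> space \<mu>. S z \<le> a} \<subseteq> {z \<in> space \<mu>. S z \<le> q}" using aq by auto
      have s4: "{z \<in> space \<mu>. S z \<le> q} \<subseteq> {z \<in> space \<mu>. S z \<le> b}" using qb by auto
      have g1: "G a \<le> H d q l" unfolding Hl G_def using s1 setL by (rule P.finite_measure_mono)
      have g2: "H d q l \<le> G b" unfolding Hl G_def using s2 setS by (rule P.finite_measure_mono)
      have g3: "G a \<le> H d q lam" unfolding Hlam G_def using s3 setS by (rule P.finite_measure_mono)
      have g4: "H d q lam \<le> G b" unfolding Hlam G_def using s4 setS by (rule P.finite_measure_mono)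
      have r1: "r \<ge> 1" using e0 e1' by (simp add: r_def le_divide_eq)
      have r3: "r \<le> 3" using e1 e1' by (simp add: r_def divide_le_eq)
      have rr: "r - 1 \<le> 4 * \<epsilon>"
      proof -
        have "r - 1 = 2 * \<epsilon> / (1 - \<epsilon>)" using e1' by (simp add: r_def field_simps)
        also have "\<dots> \<le> 4 * \<epsilon>"
        proof -
          have h: "0 \<le> \<epsilon> * (1 - 2 * \<epsilon>)" using e0 e1 by (intro mult_nonneg_nonneg) auto
          have "2 * \<epsilon> \<le> (4 * \<epsilon>) * (1 - \<epsilon>)" using h by (simp add: algebra_simps)
          then show ?thesis using e1' by (simp add: pos_divide_le_eq)
        qed
        finally show ?thesis .
      qed
      have Gb: "G b \<le> r ^ d * G a"
        unfolding G_def b_def \<mu>_def S_def by (rule G_scale[OF r1])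
      have Ga1: "G a \<le> 1" "G a \<ge> 0" by (simp_all add: G_def)
      have "\<bar>H d q l - H d q lam\<bar> \<le> G b - G a" using g1 g2 g3 g4 by linarith
      also have "\<dots> \<le> (r ^ d - 1) * G a" using Gb by (simp add: algebra_simps)
      also have "\<dots> \<le> r ^ d - 1" using Ga1 r1 by (intro mult_left_le) (auto simp: one_le_power)
      also have "\<dots> \<le> real d * 3 ^ d * (r - 1)" using pow3[OF r1 r3] .
      also have "\<dots> \<le> real d * 3 ^ d * (4 * \<epsilon>)" using rr by (intro mult_left_mono) auto
      also have "\<dots> = C * v" using m0 by (simp add: C_def \<epsilon>_def)
      finally show ?thesis by (simp add: v_def)
    qed
  qed
  show ?thesis
    using m0 C0 main by (intro exI[of _ "m / 2"] exI[of _ C]) auto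
qed



lemma vdist_meas:
  assumes "\<And>j. j < d \<Longrightarrow> (\<lambda>\<omega>. X \<omega> j) \<in> borel_measurable M"
  shows "(\<lambda>\<omega>. vdist d (X \<omega>) lam) \<in> borel_measurable M"
proof -
  have "(\<lambda>\<omega>. \<Sum>j<d. (X \<omega> j - lam j)\<^sup>2) \<in> borel_measurable M"
  proof (rule borel_measurable_sum)
    fix j assume "j \<in> {..<d}"
    then have "(\<lambda>\<omega>. X \<omega> j) \<in> borel_measurable M" using assms by simp
    then show "(\<lambda>\<omega>. (X \<omega> j - lam j)\<^sup>2) \<in> borel_measurable M" by measurable
  qed
  then show ?thesis unfolding vdist_def by measurable
qed

theorem theorem1:
  fixes M :: "'a measure" and d :: nat
    and T :: "nat \<Rightarrow> 'a \<Rightarrow> real"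
    and lam :: "nat \<Rightarrow> real"
    and lamhat :: "nat \<Rightarrow> 'a \<Rightarrow> (nat \<Rightarrow> real)"
  assumes "prob_space M"
    and "d \<ge> 1"
    and "\<And>j. j < d \<Longrightarrow> lam j > 0"
    and "\<And>n. T n \<in> borel_measurable M"
    and "\<And>n j. j < d \<Longrightarrow> (\<lambda>\<omega>. lamhat n \<omega> j) \<in> borel_measurable M"
    and "conv_in_prob M (\<lambda>n \<omega>. vdist d (lamhat n \<omega>) lam) 0"
  shows "\<exists>B :: nat \<Rightarrow> 'a \<Rightarrow> real.
           (\<forall>n. B n \<in> borel_measurable M) \<and> bounded_in_prob M B \<and>
           (\<forall>n. \<forall>\<omega>\<in>space M.
              \<bar>(1 - H d (T n \<omega>) (lamhat n \<omega>)) - (1 - H d (T n \<omega>) lam)\<bar>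
                \<le> vdist d (lamhat n \<omega>) lam * B n \<omega>) \<and>
           conv_in_prob M (\<lambda>n \<omega>. (1 - H d (T n \<omega>) (lamhat n \<omega>)) - (1 - H d (T n \<omega>) lam)) 0"
proof -
  interpret P: prob_space M by fact
  obtain \<delta> C where d0: "\<delta> > 0" and C0: "C \<ge> 0"
    and lipC: "\<And>q l. vdist d l lam \<le> \<delta> \<Longrightarrow> \<bar>H d q l - H d q lam\<bar> \<le> C * vdist d l lam"
    using lip[where lam=lam, OF assms(2) assms(3)] by blast
  define K where "K = max C (1 / \<delta>)"
  have K0: "K > 0" using d0 less_max_iff_disj[of 0 C "1 / \<delta>"] by (simp add: K_def)
  have bound: "\<bar>(1 - H d q l) - (1 - H d q lam)\<bar> \<le> vdist d l lam * K" for q l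
  proof (cases "vdist d l lam \<le> \<delta>")
    case True
    have v0: "vdist d l lam \<ge> 0" by (simp add: vdist_def sum_nonneg)
    have "\<bar>(1 - H d q l) - (1 - H d q lam)\<bar> = \<bar>H d q l - H d q lam\<bar>" by simp
    also have "\<dots> \<le> C * vdist d l lam" using lipC[OF True] .
    also have "\<dots> \<le> K * vdist d l lam" using v0 by (intro mult_right_mono) (auto simp: K_def)
    finally show ?thesis by (simp add: mult.commute)
  next
    case False
    have "\<bar>(1 - H d q l) - (1 - H d q lam)\<bar> \<le> 1"
      using H_bounds[of d q l] H_bounds[of d q lam] by linarith
    also have "1 \<le> vdist d l lam * (1 / \<delta>)" using False d0 by (simp add: le_divide_eq)
    also have "\<dots> \<le> vdist d l lam * K" using False d0 by (intro mult_left_mono) (auto simp: K_def)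
    finally show ?thesis .
  qed
  have vm: "(\<lambda>\<omega>. vdist d (lamhat n \<omega>) lam) \<in> borel_measurable M" for n
    by (rule vdist_meas) (rule assms(5))
  have conv: "conv_in_prob M (\<lambda>n \<omega>. (1 - H d (T n \<omega>) (lamhat n \<omega>)) - (1 - H d (T n \<omega>) lam)) 0"
    unfolding conv_in_prob_def
  proof (intro allI impI)
    fix e :: real assume e: "e > 0"
    define Y where "Y = (\<lambda>n. measure M {\<omega> \<in> space M. \<bar>vdist d (lamhat n \<omega>) lam - 0\<bar> > e / K})"
    have Y: "Y \<longlonglongrightarrow> 0" using assms(6) e K0 unfolding conv_in_prob_def Y_def by simp
    show "(\<lambda>n. measure M {\<omega> \<in> space M. \<bar>(1 - H d (T n \<omega>) (lamhat n \<omega>)) - (1 - H d (T n \<omega>) lam) - 0\<bar> > e}) \<longlonglongrightarrow> 0"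
    proof (rule tendsto_sandwich[OF _ _ tendsto_const Y])
      show "\<forall>\<^sub>F n in sequentially. 0 \<le> measure M {\<omega> \<in> space M. \<bar>(1 - H d (T n \<omega>) (lamhat n \<omega>)) - (1 - H d (T n \<omega>) lam) - 0\<bar> > e}"
        by simp
      show "\<forall>\<^sub>F n in sequentially. measure M {\<omega> \<in> space M. \<bar>(1 - H d (T n \<omega>) (lamhat n \<omega>)) - (1 - H d (T n \<omega>) lam) - 0\<bar> > e} \<le> Y n"
      proof (rule always_eventually, rule allI)
        fix n
        define A where "A = {\<omega> \<in> space M. \<bar>(1 - H d (T n \<omega>) (lamhat n \<omega>)) - (1 - H d (T n \<omega>) lam) - 0\<bar> > e}"
        define B where "B = {\<omega> \<in> space M. \<bar>vdist d (lamhat n \<omega>) lam - 0\<bar> > e / K}"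
        have Bs: "B \<in> sets M" unfolding B_def using vm[of n] by measurable
        have AB: "A \<subseteq> B"
        proof
          fix \<omega> assume "\<omega> \<in> A"
          then have w: "\<omega> \<in> space M" and gt: "e < \<bar>(1 - H d (T n \<omega>) (lamhat n \<omega>)) - (1 - H d (T n \<omega>) lam)\<bar>"
            by (auto simp: A_def)
          have v0: "vdist d (lamhat n \<omega>) lam \<ge> 0" by (simp add: vdist_def sum_nonneg)
          have "e < vdist d (lamhat n \<omega>) lam * K" using gt bound[of "T n \<omega>" "lamhat n \<omega>"] by linarith
          then have "e / K < vdist d (lamhat n \<omega>) lam" using K0 by (simp add: pos_divide_less_eq)
          then show "\<omega> \<in> B" using w v0 by (simp add: B_def)
        qed
        show "measure M A \<le> Y n"
        proof (cases "A \<in> sets M")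
          case True
          then have "measure M A \<le> measure M B" using AB Bs by (intro P.finite_measure_mono)
          then show ?thesis by (simp add: Y_def B_def)
        next
          case False
          then show ?thesis by (simp add: measure_notin_sets Y_def)
        qed
      qed
    qed
  qed
  show ?thesis
  proof (intro exI[of _ "\<lambda>n \<omega>. K"] conjI allI ballI)
    show "\<And>n. (\<lambda>\<omega>. K) \<in> borel_measurable M" by simp
    show "bounded_in_prob M (\<lambda>n \<omega>. K)" unfolding bounded_in_prob_def
    proof (intro allI impI)
      fix e :: real assume "e > 0"
      then show "\<exists>K'. \<forall>n. measure M {\<omega> \<in> space M. \<bar>K\<bar> > K'} < e" using K0 by (intro exI[of _ K]) simp
    qed
    show "\<And>n \<omega>. \<omega> \<in> space M \<Longrightarrow> \<bar>(1 - H d (T n \<omega>) (lamhat n \<omega>)) - (1 - H d (T n \<omega>) lam)\<bar>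
                \<le> vdist d (lamhat n \<omega>) lam * K" using bound by simp
    show "conv_in_prob M (\<lambda>n \<omega>. (1 - H d (T n \<omega>) (lamhat n \<omega>)) - (1 - H d (T n \<omega>) lam)) 0" by (rule conv)
  qed
qed


end
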